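(* Let $n,k,\delta,\alpha$ be positive integers with $1\le\delta\le k$, $\delta+k\le n$ and $\alpha\ge2$. Then $$\mathcal B_q(n,k,\delta;\alpha)\ge(\alpha-1)\,q^{\max\{k,n-k\}(\min\{k,n-k\}-\delta+1)}.$$
   Context: An $\alpha$-$(n,k,\delta)_q^c$ covering Grassmannian code is a finite multiset of $k$-dimensional subspaces of $\mathbb F_q^n$ such that any $\alpha$ of its elements (taken with distinct indices) span a subspace of dimension at least $k+\delta$. $\mathcal B_q(n,k,\delta;\alpha)$ denotes the maximum size of such a code. *)

theory Defs
  imports Complex_Main "HOL-Library.Function_Algebras" "HOL-Library.Cardinality"
begin

text \<open>The ambient space F_q^n is modelled as the functions v :: nat => 'a (with 'a a finite
field, q = CARD('a)) that vanish at every index i >= n.  Scalar multiplication is pointwise.\<close>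

definition fscale :: "'a::field \<Rightarrow> (nat \<Rightarrow> 'a) \<Rightarrow> (nat \<Rightarrow> 'a)" where
  "fscale c v = (\<lambda>i. c * v i)"

definition ambient :: "nat \<Rightarrow> (nat \<Rightarrow> 'a::field) set" where
  "ambient n = {v. \<forall>i\<ge>n. v i = 0}"

definition vdim :: "(nat \<Rightarrow> 'a::field) set \<Rightarrow> nat" where
  "vdim S = vector_space.dim fscale S"

definition is_k_subspace :: "nat \<Rightarrow> nat \<Rightarrow> (nat \<Rightarrow> 'a::field) set \<Rightarrow> bool" where
  "is_k_subspace n k U \<longleftrightarrow> U \<subseteq> ambient n \<and> module.subspace fscale U \<and> vdim U = k"

text \<open>A covering Grassmannian code of size m, given as an indexed family (i.e. a multiset)
C 0, ..., C (m-1) of k-subspaces of F_q^n: any alpha members with distinct indices span a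
subspace of dimension at least k + delta.\<close>
definition covering_code ::
  "nat \<Rightarrow> nat \<Rightarrow> nat \<Rightarrow> nat \<Rightarrow> nat \<Rightarrow> (nat \<Rightarrow> (nat \<Rightarrow> 'a::field) set) \<Rightarrow> bool" where
  "covering_code n k \<delta> \<alpha> m C \<longleftrightarrow>
     (\<forall>i<m. is_k_subspace n k (C i)) \<and>
     (\<forall>I. I \<subseteq> {..<m} \<and> card I = \<alpha> \<longrightarrow> vdim (\<Union>i\<in>I. C i) \<ge> k + \<delta>)"

definition B_q :: "'a::{finite,field} itself \<Rightarrow> nat \<Rightarrow> nat \<Rightarrow> nat \<Rightarrow> nat \<Rightarrow> nat" where
  "B_q TYPE('a) n k \<delta> \<alpha> =
     Sup {m. \<exists>C :: nat \<Rightarrow> (nat \<Rightarrow> 'a) set. covering_code n k \<delta> \<alpha> m C}"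

end

theory Submission
  imports Defs "HOL-Algebra.Algebraic_Closure_Type"
begin

definition lc :: "'b::field list \<Rightarrow> (nat \<Rightarrow> 'b) \<Rightarrow> 'b" where
  "lc bs c = (\<Sum>i<length bs. c i * bs ! i)"

lemma sum_closed_set:
  assumes "finite I" "0 \<in> G" "\<And>x y. x \<in> G \<Longrightarrow> y \<in> G \<Longrightarrow> x + y \<in> G"
    "\<And>i. i \<in> I \<Longrightarrow> t i \<in> G"
  shows "sum t I \<in> G"
  using assms(1,4)
proof (induction I rule: finite_induct)
  case empty thus ?case using assms(2) by simp
next
  case (insert x F) thus ?case using assms(3) by simp
qed

lemma lc_closed:
  assumes "set bs \<subseteq> G" "0 \<in> G" "\<And>x y. x \<in> G \<Longrightarrow> y \<in> G \<Longrightarrow> x + y \<in> G"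
    "\<And>c x. c \<in> F \<Longrightarrow> x \<in> G \<Longrightarrow> c * x \<in> G"
    "c \<in> PiE {..<length bs} (\<lambda>_. F)"
  shows "lc bs c \<in> G"
  unfolding lc_def
proof (rule sum_closed_set)
  fix i assume "i \<in> {..<length bs}"
  hence "c i \<in> F" "bs ! i \<in> G" using assms(1,5) nth_mem by (auto simp: PiE_iff)
  thus "c i * bs ! i \<in> G" using assms(4) by blast
qed (use assms in auto)

lemma lc_append: "lc (bs @ [x]) c = lc bs c + c (length bs) * x"
  unfolding lc_def by (simp add: nth_append)

lemma lc_cong: "(\<And>i. i < length bs \<Longrightarrow> c i = c' i) \<Longrightarrow> lc bs c = lc bs c'"
  unfolding lc_def by (rule sum.cong) auto

lemma exists_basis:
  fixes F G :: "'b::field set"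
  assumes F: "finite F" "0 \<in> F" "1 \<in> F"
    "\<And>x y. x \<in> F \<Longrightarrow> y \<in> F \<Longrightarrow> x - y \<in> F"
    "\<And>x y. x \<in> F \<Longrightarrow> y \<in> F \<Longrightarrow> x * y \<in> F"
    "\<And>x. x \<in> F \<Longrightarrow> inverse x \<in> F"
  assumes G: "finite G" "0 \<in> G" "\<And>x y. x \<in> G \<Longrightarrow> y \<in> G \<Longrightarrow> x + y \<in> G"
    "\<And>c x. c \<in> F \<Longrightarrow> x \<in> G \<Longrightarrow> c * x \<in> G"
  shows "\<exists>bs. bij_betw (lc bs) (PiE {..<length bs} (\<lambda>_. F)) G"
proof -
  define P where "P = (\<lambda>bs. set bs \<subseteq> G \<and> inj_on (lc bs) (PiE {..<length bs} (\<lambda>_. F)))"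
  have cardF: "card F \<ge> 2"
  proof -
    have "{0,1} \<subseteq> F" using F by auto
    hence "card {0::'b,1} \<le> card F" using F(1) by (intro card_mono) auto
    thus ?thesis by simp
  qed
  have bound: "length bs < card G + 1" if "P bs" for bs
  proof -
    have "length bs < 2 ^ length bs" by (rule less_exp)
    also have "\<dots> \<le> card F ^ length bs" using cardF by (intro power_mono) auto
    also have "\<dots> = card (PiE {..<length bs} (\<lambda>_. F))" by (simp add: card_PiE)
    also have "\<dots> = card (lc bs ` PiE {..<length bs} (\<lambda>_. F))"
      using that unfolding P_def by (simp add: card_image)
    also have "\<dots> \<le> card G"
      using that G unfolding P_def by (intro card_mono) (auto intro!: lc_closed[of bs G F])
    finally show ?thesis by simp
  qed
  have "P []" unfolding P_def by (auto simp: inj_on_def)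
  then obtain bs where bs: "P bs" and max: "\<And>bs'. P bs' \<Longrightarrow> length bs' \<le> length bs"
    using ex_has_greatest_nat[of P "[]" length "card G + 1"] bound by blast
  have img: "lc bs ` PiE {..<length bs} (\<lambda>_. F) = G"
  proof
    show "lc bs ` PiE {..<length bs} (\<lambda>_. F) \<subseteq> G"
      using bs G unfolding P_def by (auto intro!: lc_closed[of bs G F])
  next
    show "G \<subseteq> lc bs ` PiE {..<length bs} (\<lambda>_. F)"
    proof (rule ccontr)
      assume "\<not> ?thesis"
      then obtain x where x: "x \<in> G" "x \<notin> lc bs ` PiE {..<length bs} (\<lambda>_. F)" by auto
      have "P (bs @ [x])"
        unfolding P_def
      proof
        show "set (bs @ [x]) \<subseteq> G" using bs x unfolding P_def by auto
        show "inj_on (lc (bs @ [x])) (PiE {..<length (bs @ [x])} (\<lambda>_. F))"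
        proof (rule inj_onI)
          fix c c' assume c: "c \<in> PiE {..<length (bs @ [x])} (\<lambda>_. F)"
            and c': "c' \<in> PiE {..<length (bs @ [x])} (\<lambda>_. F)"
            and eq: "lc (bs @ [x]) c = lc (bs @ [x]) c'"
          let ?l = "length bs"
          have cl: "c ?l \<in> F" "c' ?l \<in> F" using c c' by auto
          have eq2: "lc bs c + c ?l * x = lc bs c' + c' ?l * x"
            using eq by (simp add: lc_append)
          show "c = c'"
          proof (cases "c ?l = c' ?l")
            case True
            hence "lc bs c = lc bs c'" using eq2 by simp
            moreover have "lc bs (restrict c {..<?l}) = lc bs c" by (rule lc_cong) simp
            moreover have "lc bs (restrict c' {..<?l}) = lc bs c'" by (rule lc_cong) simp
            ultimately have eqr: "lc bs (restrict c {..<?l}) = lc bs (restrict c' {..<?l})"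
              by simp
            have r1: "restrict c {..<?l} \<in> PiE {..<?l} (\<lambda>_. F)"
              using c by (simp add: restrict_PiE_iff PiE_iff)
            have r2: "restrict c' {..<?l} \<in> PiE {..<?l} (\<lambda>_. F)"
              using c' by (simp add: restrict_PiE_iff PiE_iff)
            have inj: "inj_on (lc bs) (PiE {..<?l} (\<lambda>_. F))" using bs unfolding P_def by blast
            have "restrict c {..<?l} = restrict c' {..<?l}"
              by (rule inj_onD[OF inj eqr r1 r2])
            show "c = c'"
            proof
              fix i
              show "c i = c' i"
              proof (cases "i < ?l")
                case True
                thus ?thesis using \<open>restrict c {..<?l} = restrict c' {..<?l}\<close>
                  by (metis lessThan_iff restrict_apply')
              next
                case False
                show ?thesis
                proof (cases "i = ?l")
                  case True thus ?thesis using \<open>c ?l = c' ?l\<close> by simp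
                next
                  case False
                  hence "i \<notin> {..<length (bs @ [x])}" using \<open>\<not> i < ?l\<close> by auto
                  thus ?thesis using c c' PiE_arb by metis
                qed
              qed
            qed
          next
            case False
            define d where "d = inverse (c ?l - c' ?l)"
            have dF: "d \<in> F" unfolding d_def using cl F by auto
            have dne: "(c ?l - c' ?l) * d = 1" unfolding d_def using False by simp
            define e where "e = restrict (\<lambda>i. (c' i - c i) * d) {..<?l}"
            have eF: "e \<in> PiE {..<?l} (\<lambda>_. F)"
            proof -
              have "(c' i - c i) * d \<in> F" if "i < ?l" for i
              proof -
                have "c' i \<in> F" "c i \<in> F" using c c' that by (auto simp: PiE_iff)
                thus ?thesis using F(4,5) dF by blast
              qed
              thus ?thesis unfolding e_def by (simp add: restrict_PiE_iff)
            qed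
            have "(c ?l - c' ?l) * x = lc bs c' - lc bs c"
              using eq2 by (simp add: algebra_simps)
            hence "d * ((c ?l - c' ?l) * x) = d * (lc bs c' - lc bs c)" by simp
            moreover have "d * ((c ?l - c' ?l) * x) = ((c ?l - c' ?l) * d) * x"
              by (simp only: ac_simps)
            ultimately have "x = d * (lc bs c' - lc bs c)" using dne by simp
            also have "lc bs c' - lc bs c = (\<Sum>i<?l. (c' i - c i) * bs ! i)"
              unfolding lc_def by (simp add: sum_subtractf[symmetric] left_diff_distrib)
            also have "d * \<dots> = (\<Sum>i<?l. d * ((c' i - c i) * bs ! i))"
              by (simp add: sum_distrib_left)
            also have "\<dots> = lc bs e"
              unfolding lc_def e_def by (rule sum.cong) (simp_all only: ac_simps restrict_apply' lessThan_iff)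
            finally have "x \<in> lc bs ` PiE {..<?l} (\<lambda>_. F)" using eF by auto
            thus "c = c'" using x by simp
          qed
        qed
      qed
      from max[OF this] show False by simp
    qed
  qed
  show ?thesis
    using bs img unfolding P_def bij_betw_def by blast
qed


lemma power_card_same:
  fixes x :: "'a::{finite,field}"
  shows "x ^ CARD('a) = x"
proof (cases "x = 0")
  case False
  have "x * (\<Prod>y\<in>UNIV-{0}. x * y) = x * x ^ (card (UNIV :: 'a set) - 1) * \<Prod>(UNIV-{0})"
    by (simp add: prod.distrib mult_ac)
  also have "x * x ^ (card (UNIV :: 'a set) - 1) = x ^ Suc (card (UNIV :: 'a set) - 1)"
    by (subst power_Suc) auto
  also have "Suc (card (UNIV :: 'a set) - 1) = card (UNIV :: 'a set)"
    using finite_UNIV_card_ge_0[where ?'a = 'a] by simp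
  also have "(\<Prod>y\<in>UNIV-{0}. x * y) = (\<Prod>y\<in>UNIV-{0}. y)"
    by (rule prod.reindex_bij_witness[of _ "\<lambda>y. y / x" "\<lambda>y. x * y"]) (use False in auto)
  finally show ?thesis
    by simp
qed (use finite_UNIV_card_ge_0[where ?'a = 'a] in auto)

lemma power_card_power_same:
  fixes x :: "'a::{finite,field}"
  shows "x ^ (CARD('a) ^ n) = x"
  by (induction n) (simp_all add: power_card_same power_mult)

lemma CHAR_prime_fin: "prime CHAR('a::{finite,field})"
  using finite_imp_CHAR_pos[where 'a='a] prime_CHAR_semidom by auto

lemma card_ge2: "CARD('a::{finite,field}) \<ge> 2"
proof -
  have "{0::'a, 1} \<subseteq> UNIV" by simp
  hence "card {0::'a,1} \<le> CARD('a)" by (intro card_mono) auto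
  thus ?thesis by simp
qed

lemma of_nat_mod_CHAR': "(of_nat (x mod CHAR('a)) :: 'a::semiring_1) = of_nat x"
proof -
  have "x = x mod CHAR('a) + CHAR('a) * (x div CHAR('a))" by simp
  hence "(of_nat x :: 'a) = of_nat (x mod CHAR('a)) + of_nat (CHAR('a) * (x div CHAR('a)))"
    by (metis of_nat_add)
  also have "(of_nat (CHAR('a) * (x div CHAR('a))) :: 'a) = 0"
    by (simp add: of_nat_eq_0_iff_char_dvd)
  finally show ?thesis by simp
qed

lemma card_prime_power: "\<exists>r. CARD('a::{finite,field}) = CHAR('a) ^ r"
proof -
  define p where "p = CHAR('a)"
  have pp: "prime p" unfolding p_def by (rule CHAR_prime_fin)
  hence p0: "p > 0" by (simp add: prime_gt_0_nat)
  define F where "F = (of_nat ` {..<p} :: 'a set)"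
  have memF: "(of_nat x :: 'a) \<in> F" for x
  proof -
    have "(of_nat x :: 'a) = of_nat (x mod p)" unfolding p_def by (simp add: of_nat_mod_CHAR')
    thus ?thesis unfolding F_def using p0 by auto
  qed
  have Fmul: "x * y \<in> F" if "x \<in> F" "y \<in> F" for x y
    using that unfolding F_def by (auto simp flip: of_nat_mult intro: memF[unfolded F_def])
  have Fadd: "x + y \<in> F" if "x \<in> F" "y \<in> F" for x y
    using that unfolding F_def by (auto simp flip: of_nat_add intro: memF[unfolded F_def])
  have Fneg: "- x \<in> F" if "x \<in> F" for x
  proof -
    have "x \<in> of_nat ` {..<p}" using that by (simp add: F_def)
    then obtain a where a: "a < p" "x = of_nat a" by blast
    have "(of_nat (p - a) :: 'a) + of_nat a = of_nat p" using a by (simp flip: of_nat_add)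
    also have "(of_nat p :: 'a) = 0" unfolding p_def by simp
    finally have "- x = of_nat (p - a)" using a by (simp add: eq_neg_iff_add_eq_0)
    thus ?thesis using memF by simp
  qed
  have Fpow: "x ^ n \<in> F" if "x \<in> F" for x n
    using that by (induction n) (auto intro: Fmul memF[of 1, simplified])
  have Finv: "inverse x \<in> F" if "x \<in> F" for x
  proof (cases "x = 0")
    case True thus ?thesis using memF[of 0] by simp
  next
    case False
    have q2: "CARD('a) \<ge> 2" by (rule card_ge2)
    define m where "m = CARD('a) - 2"
    have cm: "CARD('a) = Suc (Suc m)" using q2 unfolding m_def by simp
    have "x * (x * x ^ m) = x * 1" using power_card_same[of x] unfolding cm by simp
    hence "x * x ^ m = 1" using False by (rule mult_left_cancel[THEN iffD1, rotated])
    hence "inverse x = x ^ m" by (rule inverse_unique)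
    thus ?thesis using Fpow that by simp
  qed
  have finF: "finite F" unfolding F_def by simp
  have "inj_on (of_nat :: nat \<Rightarrow> 'a) {..<p}"
  proof (rule inj_onI)
    fix a b assume ab: "a \<in> {..<p}" "b \<in> {..<p}" "(of_nat a :: 'a) = of_nat b"
    show "a = b"
    proof (rule ccontr)
      assume ne: "a \<noteq> b"
      have key: False if uv: "u < p" "v < p" "u < v" "(of_nat u :: 'a) = of_nat v" for u v
      proof -
        have "(of_nat (v - u) :: 'a) = of_nat v - of_nat u" using uv by (simp add: of_nat_diff)
        also have "\<dots> = 0" using uv by simp
        finally have "p dvd (v - u)" unfolding p_def by (simp add: of_nat_eq_0_iff_char_dvd)
        moreover have "0 < v - u" "v - u < p" using uv by auto
        ultimately show False using nat_dvd_not_less by blast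
      qed
      from ne have "a < b \<or> b < a" by arith
      thus False
      proof
        assume "a < b" thus False using key[of a b] ab by simp
      next
        assume "b < a" thus False using key[of b a] ab by simp
      qed
    qed
  qed
  hence cardF: "card F = p" unfolding F_def by (simp add: card_image)
  obtain bs where bs: "bij_betw (lc bs) (PiE {..<length bs} (\<lambda>_. F)) (UNIV :: 'a set)"
  proof -
    have Fdiff: "x - y \<in> F" if "x \<in> F" "y \<in> F" for x y
      using Fadd[OF that(1) Fneg[OF that(2)]] by simp
    have "\<exists>bs. bij_betw (lc bs) (PiE {..<length bs} (\<lambda>_. F)) (UNIV :: 'a set)"
      by (rule exists_basis[OF finF memF[of 0, simplified] memF[of 1, simplified] Fdiff Fmul Finv]) auto
    thus ?thesis using that by blast
  qed
  hence "CARD('a) = card (PiE {..<length bs} (\<lambda>_. F))" by (simp add: bij_betw_same_card)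
  also have "\<dots> = p ^ length bs" by (simp add: card_PiE cardF)
  finally show ?thesis unfolding p_def by blast
qed


lemma CHAR_ac_prime: "prime CHAR('a::{finite,field} alg_closure)"
  using CHAR_prime_fin[where 'a='a] by simp

lemma q_is_CHAR_power: "\<exists>r. CARD('a::{finite,field}) ^ i = CHAR('a alg_closure) ^ r"
proof -
  obtain r where "CARD('a) = CHAR('a) ^ r" using card_prime_power by blast
  hence "CARD('a) ^ i = CHAR('a alg_closure) ^ (r * i)" by (simp add: power_mult)
  thus ?thesis by blast
qed

lemma frob_add:
  fixes x y :: "'a::{finite,field} alg_closure"
  shows "(x + y) ^ (CARD('a) ^ i) = x ^ (CARD('a) ^ i) + y ^ (CARD('a) ^ i)"
proof -
  obtain r where r: "CARD('a) ^ i = CHAR('a alg_closure) ^ r" using q_is_CHAR_power by blast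
  show ?thesis by (rule freshmans_dream'[OF CHAR_ac_prime r])
qed

lemma frob_sum:
  fixes f :: "'b \<Rightarrow> 'a::{finite,field} alg_closure"
  shows "(sum f A) ^ (CARD('a) ^ i) = (\<Sum>j\<in>A. f j ^ (CARD('a) ^ i))"
proof -
  obtain r where r: "CARD('a) ^ i = CHAR('a alg_closure) ^ r" using q_is_CHAR_power by blast
  show ?thesis by (rule freshmans_dream_sum'[OF CHAR_ac_prime r])
qed

lemma frob_neg:
  fixes x :: "'a::{finite,field} alg_closure"
  shows "(- x) ^ (CARD('a) ^ i) = - (x ^ (CARD('a) ^ i))"
proof -
  have pos: "CARD('a) ^ i > 0" by simp
  have "0 = (x + - x) ^ (CARD('a) ^ i)" using pos by simp
  also have "\<dots> = x ^ (CARD('a) ^ i) + (- x) ^ (CARD('a) ^ i)" by (rule frob_add)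
  finally show ?thesis by (simp add: eq_neg_iff_add_eq_0 add.commute)
qed

lemma frob_diff:
  fixes x y :: "'a::{finite,field} alg_closure"
  shows "(x - y) ^ (CARD('a) ^ i) = x ^ (CARD('a) ^ i) - y ^ (CARD('a) ^ i)"
  using frob_add[of x "- y" i] frob_neg[of y i] by simp

lemma frob_to_ac: "(to_ac (c::'a::{finite,field})) ^ (CARD('a) ^ i) = to_ac c"
  by (simp flip: to_ac_power add: power_card_power_same)

lemma of_nat_q_ac: "i > 0 \<Longrightarrow> (of_nat (CARD('a::{finite,field}) ^ i) :: 'a alg_closure) = 0"
proof -
  assume i: "i > 0"
  obtain r where r: "CARD('a) = CHAR('a) ^ r" using card_prime_power by blast
  have "r > 0" using card_ge2[where 'a='a] r by (cases r) auto
  hence "r * i > 0" using i by simp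
  hence "CHAR('a) dvd CHAR('a) ^ (r * i)" by (simp add: dvd_power)
  hence "CHAR('a alg_closure) dvd CARD('a) ^ i" using r by (simp add: power_mult)
  thus ?thesis by (simp only: of_nat_eq_0_iff_char_dvd)
qed

definition Efld :: "'a::{finite,field} itself \<Rightarrow> nat \<Rightarrow> 'a alg_closure set" where
  "Efld _ N = {x. x ^ (CARD('a) ^ N) = x}"

lemma E_add: "x \<in> Efld TYPE('a::{finite,field}) N \<Longrightarrow> y \<in> Efld TYPE('a) N \<Longrightarrow> x + y \<in> Efld TYPE('a) N"
  unfolding Efld_def by (simp add: frob_add power_mult[symmetric])

lemma E_mult: "x \<in> Efld TYPE('a::{finite,field}) N \<Longrightarrow> y \<in> Efld TYPE('a) N \<Longrightarrow> x * y \<in> Efld TYPE('a) N"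
  unfolding Efld_def by (simp add: power_mult_distrib)

lemma E_neg: "x \<in> Efld TYPE('a::{finite,field}) N \<Longrightarrow> - x \<in> Efld TYPE('a) N"
  unfolding Efld_def by (simp add: frob_neg)

lemma E_diff: "x \<in> Efld TYPE('a::{finite,field}) N \<Longrightarrow> y \<in> Efld TYPE('a) N \<Longrightarrow> x - y \<in> Efld TYPE('a) N"
  unfolding Efld_def by (simp add: frob_diff)

lemma E_zero: "0 \<in> Efld TYPE('a::{finite,field}) N"
  unfolding Efld_def by simp

lemma E_to_ac: "to_ac c \<in> Efld TYPE('a::{finite,field}) N"
  unfolding Efld_def by (simp add: frob_to_ac)

lemma E_pow: "x \<in> Efld TYPE('a::{finite,field}) N \<Longrightarrow> x ^ (CARD('a) ^ i) \<in> Efld TYPE('a) N"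
proof -
  assume "x \<in> Efld TYPE('a) N"
  hence h: "x ^ (CARD('a) ^ N) = x" unfolding Efld_def by simp
  have "(x ^ (CARD('a) ^ i)) ^ (CARD('a) ^ N) = (x ^ (CARD('a) ^ N)) ^ (CARD('a) ^ i)"
    by (simp flip: power_mult add: mult.commute)
  thus ?thesis unfolding Efld_def using h by simp
qed

lemma card_E:
  assumes N: "N > 0"
  shows "card (Efld TYPE('a::{finite,field}) N) = CARD('a) ^ N"
proof -
  define Q where "Q = CARD('a) ^ N"
  have "CARD('a) ^ 1 \<le> CARD('a) ^ N"
    by (rule power_increasing) (use N card_ge2[where 'a='a] in auto)
  hence Q2: "Q \<ge> 2" unfolding Q_def using card_ge2[where 'a='a] by simp
  define P :: "'a alg_closure poly" where "P = Polynomial.monom 1 Q + Polynomial.monom (-1) 1"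
  have polyP: "poly P x = x ^ Q - x" for x unfolding P_def by (simp add: poly_monom)
  have degP: "Polynomial.degree P = Q" unfolding P_def
    using Q2 by (subst degree_add_eq_left) (simp_all add: degree_monom_eq)
  have P0: "P \<noteq> 0" using degP Q2 by auto
  have E: "Efld TYPE('a) N = {x. poly P x = 0}" unfolding Efld_def polyP Q_def by simp
  have dP0: "pderiv P = Polynomial.monom (of_nat Q) (Q - 1) + Polynomial.monom (-1) 0"
    unfolding P_def by (simp add: pderiv_add pderiv_monom)
  have oQ: "(of_nat Q :: 'a alg_closure) = 0" unfolding Q_def by (rule of_nat_q_ac[OF N])
  have dP: "poly (pderiv P) a = - 1" for a unfolding dP0 oQ by (simp add: poly_monom)
  obtain A where A: "size A = Polynomial.degree P"
    "P = Polynomial.smult (Polynomial.lead_coeff P) (\<Prod>x\<in>#A. [:- x, 1:])"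
    using alg_closed_imp_factorization[OF P0] by blast
  have cnt: "count A x \<le> 1" for x
  proof (rule ccontr)
    assume "\<not> count A x \<le> 1"
    hence "count A x \<ge> 2" by simp
    hence "x \<in># A" by (simp add: count_inI)
    then obtain A1 where A1: "A = add_mset x A1" by (blast dest: multi_member_split)
    hence "count A1 x \<ge> 1" using \<open>count A x \<ge> 2\<close> by simp
    hence "x \<in># A1" by (simp add: count_inI)
    then obtain B where "A1 = add_mset x B" by (blast dest: multi_member_split)
    hence B: "A = add_mset x (add_mset x B)" using A1 by simp
    define R where "R = (\<Prod>y\<in>#B. [:- y, 1:])"
    define c where "c = Polynomial.lead_coeff P"
    have eqP: "P = Polynomial.smult c ([:- x, 1:] * ([:- x, 1:] * R))"
      unfolding c_def by (subst A(2), subst B) (simp add: R_def mult.assoc)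
    have "poly (pderiv P) x = 0"
      by (subst eqP, simp only: pderiv_smult pderiv_mult poly_smult poly_mult poly_add) simp
    moreover have "poly (pderiv P) x = -1" by (rule dP)
    ultimately show False by auto
  qed
  have "size A = card (set_mset A)"
  proof -
    have "size A = sum (count A) (set_mset A)" by (rule size_multiset_overloaded_eq)
    also have "\<dots> = sum (\<lambda>_. 1) (set_mset A)"
    proof (rule sum.cong)
      fix y assume "y \<in> set_mset A"
      hence c0: "0 < count A y" by (simp only: count_greater_zero_iff)
      show "count A y = 1" using cnt[of y] c0 by linarith
    qed simp
    finally show ?thesis by simp
  qed
  moreover have "set_mset A \<subseteq> {x. poly P x = 0}"
  proof
    fix x assume x: "x \<in># A"
    have "poly P x = Polynomial.lead_coeff P * (\<Prod>y\<in>#A. poly [:- y, 1:] x)"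
      by (subst A(2)) (simp add: poly_prod_mset)
    also have "(\<Prod>y\<in>#A. poly [:- y, 1:] x) = 0"
      using x by (subst prod_mset_zero_iff) force
    finally show "x \<in> {x. poly P x = 0}" by simp
  qed
  ultimately have "Q \<le> card {x. poly P x = 0}"
    using A(1) degP card_mono[OF poly_roots_finite[OF P0]] by simp
  moreover have "card {x. poly P x = 0} \<le> Q" using card_poly_roots_bound[OF P0] degP by simp
  ultimately show ?thesis unfolding E Q_def by simp
qed


lemma exists_E_basis:
  assumes N: "N > 0"
  shows "\<exists>bs. length bs = N \<and> bij_betw (lc bs) (PiE {..<N} (\<lambda>_. range (to_ac :: 'a::{finite,field} \<Rightarrow> _)))
                 (Efld TYPE('a) N)"
proof -
  let ?F = "range (to_ac :: 'a \<Rightarrow> 'a alg_closure)"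
  let ?G = "Efld TYPE('a) N"
  have cE: "card ?G = CARD('a) ^ N" by (rule card_E[OF N])
  hence finG: "finite ?G" using card_ge2[where 'a='a] by (intro card_ge_0_finite) simp
  have "\<exists>bs. bij_betw (lc bs) (PiE {..<length bs} (\<lambda>_. ?F)) ?G"
  proof (rule exists_basis)
    show "finite ?F" by simp
    show "0 \<in> ?F" by (metis rangeI to_ac_0)
    show "1 \<in> ?F" by (metis rangeI to_ac_1)
    show "x - y \<in> ?F" if "x \<in> ?F" "y \<in> ?F" for x y
      using that by (auto simp flip: to_ac_diff)
    show "x * y \<in> ?F" if "x \<in> ?F" "y \<in> ?F" for x y
      using that by (auto simp flip: to_ac_mult)
    show "inverse x \<in> ?F" if "x \<in> ?F" for x
      using that by (auto simp flip: to_ac_inverse)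
    show "finite ?G" by (rule finG)
    show "0 \<in> ?G" by (rule E_zero)
    show "x + y \<in> ?G" if "x \<in> ?G" "y \<in> ?G" for x y using that by (rule E_add)
    show "c * x \<in> ?G" if "c \<in> ?F" "x \<in> ?G" for c x
      using that E_mult E_to_ac by blast
  qed
  then obtain bs where bs: "bij_betw (lc bs) (PiE {..<length bs} (\<lambda>_. ?F)) ?G" by blast
  hence "card ?G = card (PiE {..<length bs} (\<lambda>_. ?F))" by (simp add: bij_betw_same_card)
  also have "\<dots> = CARD('a) ^ length bs"
    by (simp add: card_PiE card_image inj_to_ac)
  finally have "CARD('a) ^ length bs = CARD('a) ^ N" using cE by simp
  hence "length bs = N" using card_ge2[where 'a='a] by (simp add: power_inject_exp)
  thus ?thesis using bs by blast
qed

locale ebasis =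
  fixes N :: nat and bs :: "'a::{finite,field} alg_closure list"
  assumes Npos: "N > 0" and len: "length bs = N"
    and bij: "bij_betw (lc bs) (PiE {..<N} (\<lambda>_. range (to_ac :: 'a \<Rightarrow> _))) (Efld TYPE('a) N)"
begin

abbreviation "E \<equiv> Efld TYPE('a) N"
abbreviation "PP \<equiv> PiE {..<N} (\<lambda>_. range (to_ac :: 'a \<Rightarrow> 'a alg_closure))"

definition emb :: "(nat \<Rightarrow> 'a) \<Rightarrow> 'a alg_closure" where
  "emb x = lc bs (\<lambda>i. to_ac (x i))"

definition co :: "'a alg_closure \<Rightarrow> nat \<Rightarrow> 'a" where
  "co e = (\<lambda>i. if i < N then of_ac (inv_into PP (lc bs) e i) else 0)"

lemma emb_restrict: "emb x = lc bs (restrict (\<lambda>i. to_ac (x i)) {..<N})"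
  unfolding emb_def by (rule lc_cong) (simp add: len)

lemma restrict_in_PP: "restrict (\<lambda>i. to_ac (x i)) {..<N} \<in> PP"
  by (simp add: restrict_PiE_iff)

lemma emb_E: "emb x \<in> E"
  using bij restrict_in_PP unfolding emb_restrict bij_betw_def by blast

lemma emb_add: "emb (x + y) = emb x + emb y"
  unfolding emb_def lc_def by (simp add: sum.distrib distrib_right)

lemma emb_zero: "emb 0 = 0"
  unfolding emb_def lc_def by simp

lemma emb_scale: "emb (\<lambda>i. c * x i) = to_ac c * emb x"
  unfolding emb_def lc_def by (simp add: sum_distrib_left mult.assoc)

lemma emb_diff: "emb (x - y) = emb x - emb y"
  unfolding emb_def lc_def by (simp add: sum_subtractf left_diff_distrib)

lemma co_emb: assumes "\<And>i. i \<ge> N \<Longrightarrow> x i = 0" shows "co (emb x) = x"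
proof
  fix i
  let ?c = "restrict (\<lambda>i. to_ac (x i)) {..<N}"
  have inj: "inj_on (lc bs) PP" using bij unfolding bij_betw_def by blast
  have "inv_into PP (lc bs) (emb x) = ?c"
    unfolding emb_restrict by (rule inv_into_f_f[OF inj restrict_in_PP])
  thus "co (emb x) i = x i" unfolding co_def using assms[of i] by auto
qed

lemma emb_co: assumes "e \<in> E" shows "emb (co e) = e"
proof -
  let ?c = "inv_into PP (lc bs) e"
  have cP: "?c \<in> PP" using bij assms by (metis bij_betw_def inv_into_into)
  have lc: "lc bs ?c = e" using bij assms by (metis bij_betw_def f_inv_into_f)
  have "emb (co e) = lc bs ?c"
    unfolding emb_def
  proof (rule lc_cong)
    fix i assume "i < length bs"
    hence i: "i < N" using len by simp
    hence "?c i \<in> range to_ac" using cP by auto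
    thus "to_ac (co e i) = ?c i" unfolding co_def using i by (auto simp: to_ac_of_ac)
  qed
  thus ?thesis using lc by simp
qed

lemma co_supp: "i \<ge> N \<Longrightarrow> co e i = 0"
  unfolding co_def by simp

lemma co_add: assumes "e \<in> E" "e' \<in> E" shows "co (e + e') = co e + co e'"
proof -
  have "emb (co e + co e') = e + e'" using assms by (simp add: emb_add emb_co)
  hence "co (e + e') = co (emb (co e + co e'))" by simp
  also have "\<dots> = co e + co e'" by (rule co_emb) (simp add: co_supp)
  finally show ?thesis .
qed

lemma co_diff: assumes "e \<in> E" "e' \<in> E" shows "co (e - e') = co e - co e'"
proof -
  have "emb (co e - co e') = e - e'" using assms by (simp add: emb_diff emb_co)
  hence "co (e - e') = co (emb (co e - co e'))" by simp
  also have "\<dots> = co e - co e'" by (rule co_emb) (simp add: co_supp)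
  finally show ?thesis .
qed

lemma co_scale: assumes "e \<in> E" shows "co (to_ac c * e) = (\<lambda>i. c * co e i)"
proof -
  have "emb (\<lambda>i. c * co e i) = to_ac c * e" using assms by (simp add: emb_scale emb_co)
  hence "co (to_ac c * e) = co (emb (\<lambda>i. c * co e i))" by simp
  also have "\<dots> = (\<lambda>i. c * co e i)" by (rule co_emb) (simp add: co_supp)
  finally show ?thesis .
qed

lemma co_zero: "co 0 = 0"
  using co_emb[of 0] emb_zero by simp

lemma emb_inj: assumes "\<And>i. i \<ge> N \<Longrightarrow> x i = 0" "\<And>i. i \<ge> N \<Longrightarrow> y i = 0" "emb x = emb y"
  shows "x = y"
  using co_emb[of x] co_emb[of y] assms by metis

end


definition Lin :: "nat \<Rightarrow> (nat \<Rightarrow> 'a::{finite,field} alg_closure) \<Rightarrow> 'a alg_closure \<Rightarrow> 'a alg_closure" where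
  "Lin K h y = (\<Sum>i<K. h i * y ^ (CARD('a) ^ i))"

lemma Lin_add: "Lin K h (y + z) = Lin K h y + Lin K h z"
  unfolding Lin_def by (simp add: frob_add distrib_left sum.distrib)

lemma Lin_diff: "Lin K h (y - z) = Lin K h y - Lin K h z"
  unfolding Lin_def by (simp add: frob_diff right_diff_distrib sum_subtractf)

lemma Lin_zero: "Lin K h 0 = 0"
  using Lin_diff[of K h 0 0] by simp
lemma Lin_zero_old: "True"
  by simp

lemma Lin_scale: "Lin K h (to_ac c * y) = to_ac c * Lin K h y"
  unfolding Lin_def by (simp add: power_mult_distrib frob_to_ac sum_distrib_left ac_simps)

lemma Lin_hdiff: "Lin K (\<lambda>i. g i - h i) y = Lin K g y - Lin K h y"
  unfolding Lin_def by (simp add: left_diff_distrib sum_subtractf)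

lemma Lin_E: assumes "\<And>i. i < K \<Longrightarrow> h i \<in> Efld TYPE('a::{finite,field}) N" "y \<in> Efld TYPE('a) N"
  shows "Lin K h y \<in> Efld TYPE('a) N"
  unfolding Lin_def
proof (rule sum_closed_set)
  fix i assume "i \<in> {..<K}"
  thus "h i * y ^ (CARD('a) ^ i) \<in> Efld TYPE('a) N"
    using assms by (intro E_mult E_pow) auto
qed (auto intro: E_zero E_add)

lemma Lin_roots:
  fixes h :: "nat \<Rightarrow> 'a::{finite,field} alg_closure"
  assumes i0: "i0 < K" "h i0 \<noteq> 0"
  shows "finite {y. Lin K h y = 0} \<and> card {y. Lin K h y = 0} \<le> CARD('a) ^ (K - 1)"
proof -
  define P where "P = (\<Sum>i<K. Polynomial.monom (h i) (CARD('a) ^ i))"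
  have polyP: "poly P y = Lin K h y" for y
    unfolding P_def Lin_def by (simp add: poly_sum poly_monom)
  have q2: "CARD('a) \<ge> 2" by (rule card_ge2)
  have "coeff P (CARD('a) ^ i0) = (\<Sum>i<K. if CARD('a) ^ i = CARD('a) ^ i0 then h i else 0)"
    unfolding P_def by (simp add: coeff_sum coeff_monom)
  also have "\<dots> = (\<Sum>i<K. if i = i0 then h i else 0)"
    using q2 by (intro sum.cong) (simp_all add: power_inject_exp)
  also have "\<dots> = h i0" using i0 by simp
  finally have "coeff P (CARD('a) ^ i0) \<noteq> 0" using i0 by simp
  hence P0: "P \<noteq> 0" by auto
  have "Polynomial.degree P \<le> CARD('a) ^ (K - 1)"
    unfolding P_def
  proof (rule degree_sum_le)
    fix i assume "i \<in> {..<K}"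
    hence "CARD('a) ^ i \<le> CARD('a) ^ (K - 1)" using q2 by (intro power_increasing) auto
    thus "Polynomial.degree (Polynomial.monom (h i) (CARD('a) ^ i)) \<le> CARD('a) ^ (K - 1)"
      using degree_monom_le le_trans by blast
  qed simp
  moreover have "{y. Lin K h y = 0} = {y. poly P y = 0}" by (simp add: polyP)
  ultimately show ?thesis using poly_roots_finite[OF P0] card_poly_roots_bound[OF P0] by simp
qed


lemma vs_fscale: "vector_space (fscale :: 'a::field \<Rightarrow> (nat \<Rightarrow> 'a) \<Rightarrow> _)"
  by unfold_locales (simp_all add: fscale_def fun_eq_iff algebra_simps)

lemma card_supp:
  assumes "finite S"
  shows "finite {x::nat \<Rightarrow> 'a::{finite,zero}. \<forall>i. i \<notin> S \<longrightarrow> x i = 0} \<and>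
         card {x::nat \<Rightarrow> 'a. \<forall>i. i \<notin> S \<longrightarrow> x i = 0} = CARD('a) ^ card S"
proof -
  let ?A = "{x::nat \<Rightarrow> 'a. \<forall>i. i \<notin> S \<longrightarrow> x i = 0}"
  have bb0: "bij_betw (\<lambda>x. restrict x S) ?A (PiE S (\<lambda>_. UNIV))"
  proof (rule bij_betw_byWitness[where f' = "\<lambda>y i. if i \<in> S then y i else 0"])
    show "\<forall>a\<in>?A. (\<lambda>i. if i \<in> S then restrict a S i else 0) = a" by (auto simp: fun_eq_iff)
    show "\<forall>a'\<in>PiE S (\<lambda>_. UNIV). restrict (\<lambda>i. if i \<in> S then a' i else 0) S = a'"
      by (auto simp: fun_eq_iff PiE_def extensional_def)
    show "(\<lambda>x. restrict x S) ` ?A \<subseteq> PiE S (\<lambda>_. UNIV)" by auto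
    show "(\<lambda>y i. if i \<in> S then y i else 0) ` PiE S (\<lambda>_. UNIV) \<subseteq> ?A" by auto
  qed
  note bb = bb0
  moreover have "finite (PiE S (\<lambda>_. UNIV :: 'a set))" using assms by (simp add: finite_PiE)
  moreover have "card (PiE S (\<lambda>_. UNIV :: 'a set)) = CARD('a) ^ card S"
    using assms by (simp add: card_PiE)
  ultimately show ?thesis using bij_betw_finite[OF bb] bij_betw_same_card[OF bb] by simp
qed

lemma ambient_eq: "ambient n = {x. \<forall>i. i \<notin> {..<n} \<longrightarrow> x i = 0}"
  unfolding ambient_def by auto

lemma finite_ambient: "finite (ambient n :: (nat \<Rightarrow> 'a::{finite,field}) set)"
  unfolding ambient_eq using card_supp[of "{..<n}", where 'a='a] by simp

lemma card_ambient: "card (ambient n :: (nat \<Rightarrow> 'a::{finite,field}) set) = CARD('a) ^ n"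
  unfolding ambient_eq using card_supp[of "{..<n}", where 'a='a] by simp

lemma subspace_ambient: "module.subspace (fscale :: 'a::field \<Rightarrow> _) (ambient n)"
proof -
  interpret V: vector_space "fscale :: 'a \<Rightarrow> (nat \<Rightarrow> 'a) \<Rightarrow> _" by (rule vs_fscale)
  show ?thesis unfolding V.subspace_def ambient_def by (auto simp: fscale_def)
qed

lemma card_span_vdim:
  fixes S :: "(nat \<Rightarrow> 'a::{finite,field}) set"
  assumes "S \<subseteq> ambient n"
  shows "finite (module.span fscale S) \<and> card (module.span fscale S) = CARD('a) ^ vdim S"
proof -
  interpret V: vector_space "fscale :: 'a \<Rightarrow> (nat \<Rightarrow> 'a) \<Rightarrow> _" by (rule vs_fscale)
  let ?W = "V.span S"
  have Wamb: "?W \<subseteq> ambient n" using V.span_minimal[OF assms subspace_ambient] .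
  obtain B where B: "B \<subseteq> ?W" "\<not> V.dependent B" "?W \<subseteq> V.span B" "card B = V.dim ?W"
    by (rule V.basis_exists[of ?W])
  have finB: "finite B" by (rule finite_subset[OF subset_trans[OF B(1) Wamb] finite_ambient])
  have spB: "V.span B = ?W"
    using B(1,3) V.span_minimal[OF B(1) V.subspace_span] by blast
  have dimB: "card B = vdim S" using B(4) V.dim_span unfolding vdim_def by simp
  define f where "f = (\<lambda>u. \<Sum>v\<in>B. fscale (u v) v)"
  have "V.span B = range f" unfolding f_def by (rule V.span_finite[OF finB])
  also have "range f = f ` PiE B (\<lambda>_. UNIV)"
  proof
    show "range f \<subseteq> f ` PiE B (\<lambda>_. UNIV)"
    proof
      fix y assume "y \<in> range f"
      then obtain u where u: "y = f u" by blast
      have "f u = f (restrict u B)" unfolding f_def by (rule sum.cong) auto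
      moreover have "restrict u B \<in> PiE B (\<lambda>_. UNIV)" by simp
      ultimately show "y \<in> f ` PiE B (\<lambda>_. UNIV)" using u by blast
    qed
  qed auto
  finally have spf: "V.span B = f ` PiE B (\<lambda>_. UNIV)" .
  have inj: "inj_on f (PiE B (\<lambda>_. UNIV))"
  proof (rule inj_onI)
    fix u u' assume u: "u \<in> PiE B (\<lambda>_. UNIV)" and u': "u' \<in> PiE B (\<lambda>_. UNIV)" and eq: "f u = f u'"
    have "(\<Sum>v\<in>B. fscale (u v - u' v) v) = f u - f u'"
      unfolding f_def by (simp add: sum_subtractf[symmetric] V.scale_left_diff_distrib)
    also have "\<dots> = 0" using eq by simp
    finally have z: "(\<Sum>v\<in>B. fscale (u v - u' v) v) = 0" .
    have "\<forall>v\<in>B. u v - u' v = 0"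
    proof (rule ccontr)
      assume "\<not> ?thesis"
      then obtain v where v: "v \<in> B" "u v - u' v \<noteq> 0" by blast
      have "\<exists>w. (\<exists>v\<in>B. w v \<noteq> 0) \<and> (\<Sum>v\<in>B. fscale (w v) v) = 0"
        by (rule exI[of _ "\<lambda>v. u v - u' v"]) (use v z in blast)
      hence "V.dependent B" by (subst V.dependent_finite[OF finB])
      thus False using B(2) by simp
    qed
    thus "u = u'" by (intro PiE_ext[OF u u']) simp
  qed
  have "card (V.span B) = card (PiE B (\<lambda>_. UNIV :: 'a set))" unfolding spf by (rule card_image[OF inj])
  also have "\<dots> = CARD('a) ^ card B" using finB by (simp add: card_PiE)
  finally have cB: "card (V.span B) = CARD('a) ^ card B" .
  have finW: "finite ?W" by (rule finite_subset[OF Wamb finite_ambient])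
  show ?thesis using cB spB dimB finW by simp
qed

lemma vdim_ge_from_card:
  fixes S :: "(nat \<Rightarrow> 'a::{finite,field}) set"
  assumes "S \<subseteq> ambient n" "T \<subseteq> module.span fscale S" "card T \<ge> CARD('a) ^ d"
  shows "vdim S \<ge> d"
proof -
  have "card T \<le> card (module.span fscale S)"
    using card_span_vdim[OF assms(1)] assms(2) by (intro card_mono) auto
  hence "CARD('a) ^ d \<le> CARD('a) ^ vdim S" using card_span_vdim[OF assms(1)] assms(3) by simp
  thus ?thesis using card_ge2[where 'a='a] by (simp add: power_increasing_iff)
qed

lemma vdim_subspace:
  fixes U :: "(nat \<Rightarrow> 'a::{finite,field}) set"
  assumes "U \<subseteq> ambient n" "module.subspace fscale U" "card U = CARD('a) ^ k"
  shows "vdim U = k"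
proof -
  interpret V: vector_space "fscale :: 'a \<Rightarrow> (nat \<Rightarrow> 'a) \<Rightarrow> _" by (rule vs_fscale)
  have sp: "V.span U = U" using assms(2) V.span_eq_iff by blast
  have "card (V.span U) = CARD('a) ^ vdim U" using card_span_vdim[OF assms(1)] by blast
  hence "card U = CARD('a) ^ vdim U" unfolding sp .
  hence "CARD('a) ^ vdim U = CARD('a) ^ k" using assms(3) by simp
  thus ?thesis using card_ge2[where 'a='a] by (simp add: power_inject_exp)
qed


lemma card_le_fibers:
  assumes "finite A" "\<And>z. z \<in> f ` A \<Longrightarrow> card {x\<in>A. f x = z} \<le> b"
  shows "card A \<le> card (f ` A) * b"
proof -
  have "A = (\<Union>z\<in>f ` A. {x\<in>A. f x = z})" by auto
  hence "card A \<le> (\<Sum>z\<in>f ` A. card {x\<in>A. f x = z})"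
    using card_UN_le[of "f ` A" "\<lambda>z. {x\<in>A. f x = z}"] assms(1) by simp
  also have "\<dots> \<le> (\<Sum>z\<in>f ` A. b)" by (rule sum_mono) (rule assms(2))
  also have "\<dots> = card (f ` A) * b" by simp
  finally show ?thesis .
qed

lemma ambient_diff: "x \<in> ambient n \<Longrightarrow> y \<in> ambient n \<Longrightarrow> x - y \<in> ambient n"
  unfolding ambient_def by auto

lemma ambient_add: "x \<in> ambient n \<Longrightarrow> y \<in> ambient n \<Longrightarrow> x + y \<in> ambient n"
  unfolding ambient_def by auto

lemma ambient_scale: "x \<in> ambient n \<Longrightarrow> fscale c x \<in> ambient n"
  unfolding ambient_def fscale_def by auto

locale codeloc = ebasis N bs for N and bs :: "'a::{finite,field} alg_closure list" +
  fixes n k \<delta> K :: nat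
  assumes kN: "k \<le> N" and nkN: "n - k \<le> N" and kn: "k \<le> n"
    and ar: "(N - (n - k)) + (K - 1) + \<delta> = k"
begin

definition Phi :: "(nat \<Rightarrow> 'a alg_closure) \<Rightarrow> (nat \<Rightarrow> 'a) \<Rightarrow> nat \<Rightarrow> 'a" where
  "Phi h x = (\<lambda>j. if j < n - k then co (Lin K h (emb x)) j else 0)"

definition vec :: "(nat \<Rightarrow> 'a alg_closure) \<Rightarrow> (nat \<Rightarrow> 'a) \<Rightarrow> nat \<Rightarrow> 'a" where
  "vec h x = (\<lambda>i. if i < k then x i else Phi h x (i - k))"

definition Cc :: "(nat \<Rightarrow> 'a alg_closure) \<Rightarrow> (nat \<Rightarrow> 'a) set" where
  "Cc h = vec h ` ambient k"

definition shift :: "(nat \<Rightarrow> 'a) \<Rightarrow> nat \<Rightarrow> 'a" where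
  "shift z = (\<lambda>i. if i < k then 0 else z (i - k))"

lemma amb_supp: "x \<in> ambient k \<Longrightarrow> i \<ge> N \<Longrightarrow> x i = 0"
  using kN unfolding ambient_def by auto

lemma LinE: "(\<And>i. i < K \<Longrightarrow> h i \<in> E) \<Longrightarrow> Lin K h (emb x) \<in> E"
  by (rule Lin_E) (auto intro: emb_E)

lemma Phi_add: assumes "\<And>i. i < K \<Longrightarrow> h i \<in> E"
  shows "Phi h (x + y) = Phi h x + Phi h y"
  unfolding Phi_def by (auto simp: fun_eq_iff emb_add Lin_add co_add[OF LinE[OF assms] LinE[OF assms]])

lemma Phi_diff: assumes "\<And>i. i < K \<Longrightarrow> h i \<in> E"
  shows "Phi h (x - y) = Phi h x - Phi h y"
  unfolding Phi_def by (auto simp: fun_eq_iff emb_diff Lin_diff co_diff[OF LinE[OF assms] LinE[OF assms]])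

lemma Phi_scale: assumes "\<And>i. i < K \<Longrightarrow> h i \<in> E"
  shows "Phi h (fscale c x) = fscale c (Phi h x)"
proof -
  have "emb (fscale c x) = to_ac c * emb x" unfolding fscale_def by (rule emb_scale)
  thus ?thesis
    unfolding Phi_def using co_scale[OF LinE[OF assms]] by (auto simp: fun_eq_iff Lin_scale fscale_def)
qed

lemma Phi_zero: "Phi h 0 = 0"
  unfolding Phi_def by (auto simp: fun_eq_iff emb_zero Lin_zero co_zero)

lemma Phi_hdiff: assumes "\<And>i. i < K \<Longrightarrow> g i \<in> E" "\<And>i. i < K \<Longrightarrow> h i \<in> E"
  shows "Phi (\<lambda>i. g i - h i) x = Phi g x - Phi h x"
  unfolding Phi_def by (auto simp: fun_eq_iff Lin_hdiff co_diff[OF LinE[OF assms(1)] LinE[OF assms(2)]])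

lemma vec_amb: "x \<in> ambient k \<Longrightarrow> vec h x \<in> ambient n"
  using kn unfolding ambient_def vec_def Phi_def by auto

lemma vec_add: assumes "\<And>i. i < K \<Longrightarrow> h i \<in> E"
  shows "vec h (x + y) = vec h x + vec h y"
  unfolding vec_def using Phi_add[OF assms] by (auto simp: fun_eq_iff)

lemma vec_scale: assumes "\<And>i. i < K \<Longrightarrow> h i \<in> E"
  shows "vec h (fscale c x) = fscale c (vec h x)"
  unfolding vec_def using Phi_scale[OF assms] by (auto simp: fun_eq_iff fscale_def)

lemma vec_zero: "vec h 0 = 0"
  unfolding vec_def using Phi_zero by (auto simp: fun_eq_iff)

lemma vec_inj: "inj_on (vec h) (ambient k)"
proof (rule inj_onI)
  fix x y assume xy: "x \<in> ambient k" "y \<in> ambient k" "vec h x = vec h y"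
  show "x = y"
  proof
    fix i show "x i = y i"
    proof (cases "i < k")
      case True thus ?thesis using fun_cong[OF xy(3), of i] unfolding vec_def by simp
    next
      case False thus ?thesis using xy(1,2) unfolding ambient_def by auto
    qed
  qed
qed

lemma card_Cc: "card (Cc h) = CARD('a) ^ k"
  unfolding Cc_def using card_image[OF vec_inj] card_ambient by simp

lemma Cc_k_subspace: assumes "\<And>i. i < K \<Longrightarrow> h i \<in> E"
  shows "is_k_subspace n k (Cc h)"
proof -
  interpret V: vector_space "fscale :: 'a \<Rightarrow> (nat \<Rightarrow> 'a) \<Rightarrow> _" by (rule vs_fscale)
  have sub: "Cc h \<subseteq> ambient n" unfolding Cc_def using vec_amb by blast
  have z: "(0 :: nat \<Rightarrow> 'a) \<in> ambient k" unfolding ambient_def by simp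
  have "V.subspace (Cc h)"
    unfolding V.subspace_def
  proof (intro conjI ballI allI)
    show "0 \<in> Cc h" unfolding Cc_def using vec_zero[of h] z by (metis image_eqI)
  next
    fix x y assume "x \<in> Cc h" "y \<in> Cc h"
    then obtain a b where ab: "a \<in> ambient k" "b \<in> ambient k" "x = vec h a" "y = vec h b"
      unfolding Cc_def by blast
    hence "x + y = vec h (a + b)" using vec_add[OF assms] by simp
    thus "x + y \<in> Cc h" unfolding Cc_def using ambient_add[OF ab(1,2)] by blast
  next
    fix c x assume "x \<in> Cc h"
    then obtain a where a: "a \<in> ambient k" "x = vec h a" unfolding Cc_def by blast
    hence "fscale c x = vec h (fscale c a)" using vec_scale[OF assms] by simp
    thus "fscale c x \<in> Cc h" unfolding Cc_def using ambient_scale[OF a(1)] by blast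
  qed
  moreover have "vdim (Cc h) = k"
    by (rule vdim_subspace[OF sub calculation card_Cc])
  ultimately show ?thesis unfolding is_k_subspace_def using sub by blast
qed


lemma finite_E: "finite E"
  using card_E[OF Npos, where 'a='a] card_ge2[where 'a='a] by (intro card_ge_0_finite) simp

lemma rank_bound:
  assumes dE: "\<And>i. i < K \<Longrightarrow> d i \<in> E" and i0: "i0 < K" "d i0 \<noteq> 0"
  shows "card (Phi d ` ambient k) \<ge> CARD('a) ^ \<delta>"
proof -
  let ?A = "ambient k :: (nat \<Rightarrow> 'a) set"
  let ?q = "CARD('a)"
  define Kr where "Kr = {x\<in>?A. Phi d x = 0}"
  have finA: "finite ?A" by (rule finite_ambient)
  have finKr: "finite Kr" unfolding Kr_def using finA by simp
  have step1: "card ?A \<le> card (Phi d ` ?A) * card Kr"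
  proof (rule card_le_fibers[OF finA])
    fix z assume "z \<in> Phi d ` ?A"
    then obtain x0 where x0: "x0 \<in> ?A" "z = Phi d x0" by blast
    have "inj_on (\<lambda>x. x - x0) {x\<in>?A. Phi d x = z}" by (rule inj_onI) simp
    moreover have "(\<lambda>x. x - x0) ` {x\<in>?A. Phi d x = z} \<subseteq> Kr"
      unfolding Kr_def using x0 by (auto simp: ambient_diff Phi_diff[OF dE])
    ultimately show "card {x\<in>?A. Phi d x = z} \<le> card Kr" using card_inj_on_le finKr by blast
  qed
  define g0 where "g0 = (\<lambda>x. Lin K d (emb x))"
  define Z where "Z = {e\<in>E. \<forall>j<n-k. co e j = 0}"
  define Y where "Y = {x :: nat \<Rightarrow> 'a. \<forall>i. i \<notin> {n-k..<N} \<longrightarrow> x i = 0}"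
  have Y: "finite Y" "card Y = ?q ^ (N - (n - k))"
    unfolding Y_def using card_supp[of "{n-k..<N}", where 'a='a] by simp_all
  have ZY: "Z \<subseteq> emb ` Y"
  proof
    fix e assume "e \<in> Z"
    hence e: "e \<in> E" "\<And>j. j < n - k \<Longrightarrow> co e j = 0" unfolding Z_def by auto
    have "co e \<in> Y" unfolding Y_def using e(2) co_supp by fastforce
    moreover have "e = emb (co e)" using emb_co[OF e(1)] by simp
    ultimately show "e \<in> emb ` Y" by blast
  qed
  have cZ: "card Z \<le> ?q ^ (N - (n - k))"
    using card_mono[OF finite_imageI[OF Y(1)] ZY] card_image_le[OF Y(1), of emb] Y(2) by linarith
  have finZ: "finite Z" using finite_subset[OF ZY finite_imageI[OF Y(1)]] .
  have gKr: "g0 ` Kr \<subseteq> Z"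
  proof
    fix e assume "e \<in> g0 ` Kr"
    then obtain x where x: "x \<in> Kr" "e = g0 x" by blast
    have "e \<in> E" unfolding x(2) g0_def by (rule LinE[OF dE])
    moreover have "co e j = 0" if "j < n - k" for j
      using x that fun_cong[of "Phi d x" 0 j] unfolding Kr_def Phi_def g0_def by auto
    ultimately show "e \<in> Z" unfolding Z_def by blast
  qed
  have roots: "finite {y. Lin K d y = 0}" "card {y. Lin K d y = 0} \<le> ?q ^ (K - 1)"
    using Lin_roots[of i0 K d, OF i0] by auto
  have step2: "card Kr \<le> card (g0 ` Kr) * ?q ^ (K - 1)"
  proof (rule card_le_fibers[OF finKr])
    fix z assume "z \<in> g0 ` Kr"
    then obtain x0 where x0: "x0 \<in> Kr" "z = g0 x0" by blast
    have x0A: "x0 \<in> ?A" using x0 unfolding Kr_def by simp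
    have "inj_on (\<lambda>x. emb (x - x0)) {x\<in>Kr. g0 x = z}"
    proof (rule inj_onI)
      fix x x' assume xx: "x \<in> {x\<in>Kr. g0 x = z}" "x' \<in> {x\<in>Kr. g0 x = z}"
        "emb (x - x0) = emb (x' - x0)"
      have "x \<in> ?A" "x' \<in> ?A" using xx unfolding Kr_def by auto
      hence "x - x0 = x' - x0"
        using xx(3) x0A by (intro emb_inj) (simp_all add: amb_supp)
      thus "x = x'" by simp
    qed
    moreover have "(\<lambda>x. emb (x - x0)) ` {x\<in>Kr. g0 x = z} \<subseteq> {y. Lin K d y = 0}"
      using x0 unfolding g0_def by (auto simp: emb_diff Lin_diff)
    ultimately have "card {x\<in>Kr. g0 x = z} \<le> card {y. Lin K d y = 0}"
      using card_inj_on_le roots(1) by blast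
    thus "card {x\<in>Kr. g0 x = z} \<le> ?q ^ (K - 1)" using roots(2) by linarith
  qed
  have "card (g0 ` Kr) \<le> ?q ^ (N - (n - k))" using card_mono[OF finZ gKr] cZ by linarith
  hence "card Kr \<le> ?q ^ (N - (n - k)) * ?q ^ (K - 1)"
    using step2 by (meson le_trans mult_le_mono1)
  moreover have "N - (n - k) + (K - 1) = k - \<delta>" using ar by linarith
  ultimately have cKr: "card Kr \<le> ?q ^ (k - \<delta>)" by (simp add: power_add[symmetric])
  have "?q ^ \<delta> * ?q ^ (k - \<delta>) = ?q ^ k" using ar by (simp add: power_add[symmetric])
  also have "\<dots> = card ?A" by (simp add: card_ambient)
  also have "\<dots> \<le> card (Phi d ` ?A) * card Kr" by (rule step1)
  also have "\<dots> \<le> card (Phi d ` ?A) * ?q ^ (k - \<delta>)" using cKr by simp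
  finally show ?thesis by simp
qed


lemma shift_Phi: assumes "\<And>i. i < K \<Longrightarrow> g i \<in> E" "\<And>i. i < K \<Longrightarrow> h i \<in> E"
  shows "shift (Phi (\<lambda>i. g i - h i) y) = vec g y - vec h y"
  unfolding shift_def vec_def using Phi_hdiff[OF assms, where x=y] by (auto simp: fun_eq_iff)

lemma dist_bound:
  assumes gE: "\<And>i. i < K \<Longrightarrow> g i \<in> E" and hE: "\<And>i. i < K \<Longrightarrow> h i \<in> E"
    and i0: "i0 < K" "g i0 \<noteq> h i0"
    and S: "Cc g \<union> Cc h \<subseteq> S" "S \<subseteq> ambient n"
  shows "vdim S \<ge> k + \<delta>"
proof -
  interpret V: vector_space "fscale :: 'a \<Rightarrow> (nat \<Rightarrow> 'a) \<Rightarrow> _" by (rule vs_fscale)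
  let ?A = "ambient k :: (nat \<Rightarrow> 'a) set"
  define d where "d = (\<lambda>i. g i - h i)"
  have dE: "d i \<in> E" if "i < K" for i unfolding d_def using gE[OF that] hE[OF that] by (rule E_diff)
  have d0: "d i0 \<noteq> 0" unfolding d_def using i0 by simp
  define Im where "Im = Phi d ` ?A"
  have cIm: "card Im \<ge> CARD('a) ^ \<delta>" unfolding Im_def by (rule rank_bound[of d i0, OF dE i0(1) d0])
  define F where "F = (\<lambda>(x, z). vec h x + shift z)"
  have inj: "inj_on F (?A \<times> Im)"
  proof (rule inj_onI)
    fix p p' assume p: "p \<in> ?A \<times> Im" "p' \<in> ?A \<times> Im" "F p = F p'"
    obtain x z x' z' where pp: "p = (x, z)" "p' = (x', z')" by (cases p, cases p')
    have xA: "x \<in> ?A" "x' \<in> ?A" using p pp by auto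
    have eq: "vec h x + shift z = vec h x' + shift z'" using p(3) pp unfolding F_def by simp
    have "x = x'"
    proof
      fix i show "x i = x' i"
      proof (cases "i < k")
        case True thus ?thesis using fun_cong[OF eq, of i] unfolding vec_def shift_def by simp
      next
        case False thus ?thesis using xA unfolding ambient_def by auto
      qed
    qed
    moreover have "z = z'"
    proof
      fix j
      have "vec h x (j + k) + shift z (j + k) = vec h x' (j + k) + shift z' (j + k)"
        using fun_cong[OF eq, of "j + k"] by simp
      thus "z j = z' j" using \<open>x = x'\<close> unfolding shift_def by simp
    qed
    ultimately show "p = p'" using pp by simp
  qed
  have finA: "finite ?A" by (rule finite_ambient)
  have finIm: "finite Im" unfolding Im_def using finA by simp
  have "card (F ` (?A \<times> Im)) = card ?A * card Im"
    using card_image[OF inj] card_cartesian_product by simp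
  also have "\<dots> \<ge> CARD('a) ^ k * CARD('a) ^ \<delta>" using cIm by (simp add: card_ambient)
  finally have cT: "card (F ` (?A \<times> Im)) \<ge> CARD('a) ^ (k + \<delta>)" by (simp add: power_add)
  have "F ` (?A \<times> Im) \<subseteq> V.span S"
  proof
    fix w assume "w \<in> F ` (?A \<times> Im)"
    then obtain x y where xy: "x \<in> ?A" "y \<in> ?A" "w = vec h x + shift (Phi d y)"
      unfolding F_def Im_def by auto
    have "w = vec h x + (vec g y - vec h y)" using xy(3) shift_Phi[OF gE hE] unfolding d_def by simp
    moreover have "vec h x \<in> S" "vec g y \<in> S" "vec h y \<in> S"
      using S(1) xy(1,2) unfolding Cc_def by auto
    ultimately show "w \<in> V.span S"
      by (simp add: V.span_add V.span_diff V.span_base)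
  qed
  thus ?thesis by (rule vdim_ge_from_card[OF S(2) _ cT])
qed

end


lemma B_bdd:
  assumes d1: "1 \<le> \<delta>" and a2: "\<alpha> \<ge> 2"
  shows "bdd_above {m. \<exists>C :: nat \<Rightarrow> (nat \<Rightarrow> 'a::{finite,field}) set. covering_code n k \<delta> \<alpha> m C}"
proof (rule bdd_aboveI)
  fix m assume "m \<in> {m. \<exists>C :: nat \<Rightarrow> (nat \<Rightarrow> 'a) set. covering_code n k \<delta> \<alpha> m C}"
  then obtain C :: "nat \<Rightarrow> (nat \<Rightarrow> 'a) set" where C: "covering_code n k \<delta> \<alpha> m C" by blast
  let ?P = "card (Pow (ambient n :: (nat \<Rightarrow> 'a) set))"
  show "m \<le> (\<alpha> - 1) * ?P"
  proof (rule ccontr)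
    assume contra: "\<not> m \<le> (\<alpha> - 1) * ?P"
    have sub: "C ` {..<m} \<subseteq> Pow (ambient n)"
      using C unfolding covering_code_def is_k_subspace_def by auto
    have cimg: "card (C ` {..<m}) \<le> ?P"
      by (rule card_mono[OF _ sub]) (simp add: finite_ambient)
    have "\<exists>U\<in>C ` {..<m}. card {i\<in>{..<m}. C i = U} \<ge> \<alpha>"
    proof (rule ccontr)
      assume "\<not> ?thesis"
      note nn = this
      have "card {i\<in>{..<m}. C i = U} \<le> \<alpha> - 1" if "U \<in> C ` {..<m}" for U
      proof -
        have "\<not> \<alpha> \<le> card {i\<in>{..<m}. C i = U}" using nn that by blast
        thus ?thesis by simp
      qed
      hence "card {..<m} \<le> card (C ` {..<m}) * (\<alpha> - 1)" by (intro card_le_fibers) auto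
      moreover have "card (C ` {..<m}) * (\<alpha> - 1) \<le> ?P * (\<alpha> - 1)"
        using cimg by (rule mult_le_mono1)
      ultimately have "m \<le> ?P * (\<alpha> - 1)" using card_lessThan[of m] by linarith
      thus False using contra by (simp add: mult.commute)
    qed
    then obtain U where U: "U \<in> C ` {..<m}" "card {i\<in>{..<m}. C i = U} \<ge> \<alpha>" by blast
    obtain I where I: "I \<subseteq> {i\<in>{..<m}. C i = U}" "card I = \<alpha>" "finite I"
      using obtain_subset_with_card_n[OF U(2)] by metis
    have "I \<subseteq> {..<m}" using I by auto
    hence ge: "vdim (\<Union>i\<in>I. C i) \<ge> k + \<delta>" using C I(2) unfolding covering_code_def by blast
    have "I \<noteq> {}" using I(2) a2 by auto
    hence "(\<Union>i\<in>I. C i) = U" using I(1) by auto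
    moreover obtain i0 where "i0 < m" "U = C i0" using U(1) by auto
    ultimately have "vdim (\<Union>i\<in>I. C i) = k"
      using C unfolding covering_code_def is_k_subspace_def by auto
    thus False using ge d1 by simp
  qed
qed

lemma pigeon2:
  assumes "I \<subseteq> {..<a * M}" "card I = Suc a" "a > 0"
  shows "\<exists>i\<in>I. \<exists>j\<in>I. i div a \<noteq> j div a"
proof (rule ccontr)
  assume "\<not> ?thesis"
  hence all: "\<And>i j. i \<in> I \<Longrightarrow> j \<in> I \<Longrightarrow> i div a = j div a" by blast
  from assms(2) have "I \<noteq> {}" by auto
  then obtain i1 where i1: "i1 \<in> I" by blast
  define t where "t = i1 div a"
  have "I \<subseteq> {t * a..<t * a + a}"
  proof
    fix i assume i: "i \<in> I"
    hence "i div a = t" using all[OF i i1] unfolding t_def by simp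
    moreover have "i = i div a * a + i mod a" by simp
    moreover have "i mod a < a" using assms(3) by simp
    ultimately show "i \<in> {t * a..<t * a + a}" by (metis atLeastLessThan_iff le_add1 nat_add_left_cancel_less)
  qed
  hence "card I \<le> card {t * a..<t * a + a}" by (intro card_mono) auto
  thus False using assms(2) by simp
qed

theorem mainTheorem14:
  fixes n k \<delta> \<alpha> :: nat
  assumes "1 \<le> \<delta>" and "\<delta> \<le> k" and "\<delta> + k \<le> n" and "\<alpha> \<ge> 2"
  shows "B_q TYPE('a::{finite,field}) n k \<delta> \<alpha> \<ge>
           (\<alpha> - 1) * CARD('a) ^ (max k (n - k) * (min k (n - k) - \<delta> + 1))"
proof -
  define N where "N = max k (n - k)"
  define K where "K = min k (n - k) - \<delta> + 1"
  define a1 where "a1 = \<alpha> - 1"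
  have a1: "a1 > 0" "\<alpha> = Suc a1" using assms(4) unfolding a1_def by auto
  have Npos: "N > 0" using assms unfolding N_def by simp
  obtain bs :: "'a alg_closure list" where bs: "length bs = N"
    "bij_betw (lc bs) (PiE {..<N} (\<lambda>_. range (to_ac :: 'a \<Rightarrow> _))) (Efld TYPE('a) N)"
    using exists_E_basis[OF Npos, where 'a='a] by blast
  have ar: "(N - (n - k)) + (K - 1) + \<delta> = k"
    using assms unfolding N_def K_def max_def min_def by auto
  have kN: "k \<le> N" "n - k \<le> N" "k \<le> n" using assms by (auto simp: N_def)
  interpret cl: codeloc N bs n k \<delta> K
    by unfold_locales (rule Npos bs(1) bs(2) kN ar)+
  define H where "H = PiE {..<K} (\<lambda>_. Efld TYPE('a) N)"
  have finH: "finite H" unfolding H_def using cl.finite_E by (simp add: finite_PiE)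
  have cH: "card H = CARD('a) ^ (N * K)"
    unfolding H_def by (simp add: card_PiE card_E[OF Npos] power_mult)
  define M where "M = card H"
  obtain en where en: "bij_betw en {0..<M} H" unfolding M_def using ex_bij_betw_nat_finite[OF finH] by blast
  define C where "C = (\<lambda>i. cl.Cc (en (i div a1)))"
  have enH: "en j \<in> H" if "j < M" for j using en that unfolding bij_betw_def by auto
  have hE: "en j i \<in> Efld TYPE('a) N" if "j < M" "i < K" for i j
    using enH[OF that(1)] that(2) unfolding H_def by auto
  have cov: "covering_code n k \<delta> \<alpha> (a1 * M) C"
    unfolding covering_code_def
  proof (intro conjI allI impI)
    fix i assume "i < a1 * M"
    hence "i div a1 < M" by (simp add: div_less_iff_less_mult mult.commute a1(1))
    thus "is_k_subspace n k (C i)" unfolding C_def by (intro cl.Cc_k_subspace hE)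
  next
    fix I assume I: "I \<subseteq> {..<a1 * M} \<and> card I = \<alpha>"
    obtain i j where ij: "i \<in> I" "j \<in> I" "i div a1 \<noteq> j div a1"
      using pigeon2[of I a1 M] I a1 by auto
    have lt: "i div a1 < M" "j div a1 < M"
      using ij I by (auto simp: div_less_iff_less_mult mult.commute a1(1))
    have "en (i div a1) \<noteq> en (j div a1)"
      using en ij(3) lt unfolding bij_betw_def inj_on_def by auto
    then obtain i0 where i0: "i0 < K" "en (i div a1) i0 \<noteq> en (j div a1) i0"
      using enH[OF lt(1)] enH[OF lt(2)] unfolding H_def by (metis PiE_ext lessThan_iff)
    have S1: "cl.Cc (en (i div a1)) \<union> cl.Cc (en (j div a1)) \<subseteq> (\<Union>i\<in>I. C i)"
      using ij unfolding C_def by auto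
    have S2: "(\<Union>i\<in>I. C i) \<subseteq> ambient n"
    proof -
      have "C l \<subseteq> ambient n" if "l \<in> I" for l
      proof -
        have "l div a1 < M" using that I by (auto simp: div_less_iff_less_mult mult.commute a1(1))
        hence "is_k_subspace n k (cl.Cc (en (l div a1)))" by (intro cl.Cc_k_subspace hE)
        thus ?thesis unfolding C_def is_k_subspace_def by blast
      qed
      thus ?thesis by blast
    qed
    show "vdim (\<Union>i\<in>I. C i) \<ge> k + \<delta>"
      by (rule cl.dist_bound[of "en (i div a1)" "en (j div a1)" i0 "\<Union>i\<in>I. C i",
            OF hE[OF lt(1)] hE[OF lt(2)] i0 S1 S2])
  qed
  have "a1 * M \<le> B_q TYPE('a) n k \<delta> \<alpha>"
    unfolding B_q_def by (rule cSup_upper) (use cov B_bdd[OF assms(1,4)] in auto)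
  thus ?thesis unfolding M_def cH a1_def N_def K_def .
qed


end
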